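(* The set of all $P^0\in L\cap\Delta^{n-1}_+$ satisfying $\bigl(P^0+\mathbf{Q}(P^0,P^* )\bigr)\cap L=\{P^0\}$ equals $$\bigcup\Bigl\{L\cap\mathcal{C}_\sigma\cap\Delta^{n-1}_+\ :\ \sigma \text{ a surjection } \{1,\dots,n\}\to\{1,\dots,k'+1\},\ 0\le k'\le n-1,\ L\cap\mathcal{C}_\sigma\neq\emptyset,\ L^0\cap Q_\sigma=\{0\}\Bigr\}.$$ Moreover, $\mathbf{Q}(P,P^* )=Q_\sigma$ for every $P\in\mathcal{C}_\sigma$.
   Context: Fix $n\ge 2$ and $P^*=(p^*_i)$ with $p^*_i>0$, $\sum_i p^*_i=1$; $\Delta^{n-1}_+=\{P\in\mathbb{R}^n: p_i>0,\ \sum_i p_i=1\}$. For $i\neq j$, $\gamma^{ji}=-\gamma^{ij}$ is the vector with $\gamma^{ji}_j=-1$, $\gamma^{ji}_i=1$, other coordinates $0$; ${\rm cone}$ denotes non-negative linear combinations; ${\rm sign}$ is three-valued; $\mathbf{Q}(P,P^* )={\rm cone}\{\gamma^{ji}\,{\rm sign}(\tfrac{p_j}{p^*_j}-\tfrac{p_i}{p^*_i}) : 1\le j<i\le n\}$. For a surjection $\sigma:\{1,\dots,n\}\to\{1,\dots,k'+1\}$: $\mathcal{C}_\sigma=\{P\in\Delta^{n-1}:\ \frac{p_i}{p^*_i}=\frac{p_j}{p^*_j}$ if $\sigma(i)=\sigma(j)$, and $\frac{p_i}{p^*_i}>\frac{p_j}{p^*_j}$ if $\sigma(j)=\sigma(i)+1\}$,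 and $Q_\sigma={\rm cone}\{\gamma^{ij}:\ \sigma(j)=\sigma(i)+1\}$. The condition manifold is $L=\{P:\ \sum_j m_{rj}p_j=M_r,\ r=0,\dots,k\}$ with $m_{0j}=1$, $M_0=1$, $L\cap\Delta^{n-1}_+\ne\emptyset$, and $L^0=\{x\in\mathbb{R}^n:\ \sum_j m_{rj}x_j=0,\ r=0,\dots,k\}$. *)

theory Defs
  imports Complex_Main
begin

text \<open>Vectors of R^n are represented as functions nat => real indexed by {1..n}
  and vanishing outside {1..n}.\<close>

definition vecn :: "nat \<Rightarrow> (nat \<Rightarrow> real) set" where
  "vecn n = {x. \<forall>t. t \<notin> {1..n} \<longrightarrow> x t = 0}"

text \<open>gamma j i is the vector with coordinate j equal to -1, coordinate i equal to 1
  (for i ~= j), other coordinates 0; i.e. gamma j i = gamma^{ji}.\<close>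
definition gamma :: "nat \<Rightarrow> nat \<Rightarrow> nat \<Rightarrow> real" where
  "gamma j i = (\<lambda>t. if t = i then 1 else if t = j then -1 else 0)"

definition fcone :: "(nat \<Rightarrow> real) set \<Rightarrow> (nat \<Rightarrow> real) set" where
  "fcone S = {x. \<exists>c. (\<forall>s\<in>S. c s \<ge> 0) \<and> (\<forall>t. x t = (\<Sum>s\<in>S. c s * s t))}"

definition simplex :: "nat \<Rightarrow> (nat \<Rightarrow> real) set" where
  "simplex n = {P \<in> vecn n. (\<forall>i\<in>{1..n}. P i \<ge> 0) \<and> (\<Sum>i=1..n. P i) = 1}"

definition simplex_pos :: "nat \<Rightarrow> (nat \<Rightarrow> real) set" where
  "simplex_pos n = {P \<in> vecn n. (\<forall>i\<in>{1..n}. P i > 0) \<and> (\<Sum>i=1..n. P i) = 1}"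

definition Qcone :: "nat \<Rightarrow> (nat \<Rightarrow> real) \<Rightarrow> (nat \<Rightarrow> real) \<Rightarrow> (nat \<Rightarrow> real) set" where
  "Qcone n P Ps = fcone {(\<lambda>t. sgn (P j / Ps j - P i / Ps i) * gamma j i t) | j i.
                           1 \<le> j \<and> j < i \<and> i \<le> n}"

definition Cset :: "nat \<Rightarrow> (nat \<Rightarrow> real) \<Rightarrow> (nat \<Rightarrow> nat) \<Rightarrow> (nat \<Rightarrow> real) set" where
  "Cset n Ps \<sigma> = {P \<in> simplex n.
      (\<forall>i\<in>{1..n}. \<forall>j\<in>{1..n}. \<sigma> i = \<sigma> j \<longrightarrow> P i / Ps i = P j / Ps j) \<and>
      (\<forall>i\<in>{1..n}. \<forall>j\<in>{1..n}. \<sigma> j = \<sigma> i + 1 \<longrightarrow> P i / Ps i > P j / Ps j)}"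

definition Qsigma :: "nat \<Rightarrow> (nat \<Rightarrow> nat) \<Rightarrow> (nat \<Rightarrow> real) set" where
  "Qsigma n \<sigma> = fcone {gamma i j | i j. i \<in> {1..n} \<and> j \<in> {1..n} \<and> \<sigma> j = \<sigma> i + 1}"

definition Lman :: "nat \<Rightarrow> nat \<Rightarrow> (nat \<Rightarrow> nat \<Rightarrow> real) \<Rightarrow> (nat \<Rightarrow> real) \<Rightarrow> (nat \<Rightarrow> real) set" where
  "Lman n k m M = {P \<in> vecn n. \<forall>r\<le>k. (\<Sum>j=1..n. m r j * P j) = M r}"

definition L0 :: "nat \<Rightarrow> nat \<Rightarrow> (nat \<Rightarrow> nat \<Rightarrow> real) \<Rightarrow> (nat \<Rightarrow> real) set" where
  "L0 n k m = {x \<in> vecn n. \<forall>r\<le>k. (\<Sum>j=1..n. m r j * x j) = 0}"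

definition translate :: "(nat \<Rightarrow> real) \<Rightarrow> (nat \<Rightarrow> real) set \<Rightarrow> (nat \<Rightarrow> real) set" where
  "translate P S = {(\<lambda>t. P t + q t) | q. q \<in> S}"

end

theory Submission
  imports Defs
begin


lemma fcone_zero: "(\<lambda>_. 0) \<in> fcone S"
  unfolding fcone_def by (rule CollectI, rule exI[of _ "\<lambda>_. 0"]) simp

lemma fcone_add: "x \<in> fcone S \<Longrightarrow> y \<in> fcone S \<Longrightarrow> (\<lambda>t. x t + y t) \<in> fcone S"
proof -
  assume "x \<in> fcone S" "y \<in> fcone S"
  then obtain c d where c: "\<forall>s\<in>S. c s \<ge> 0" "\<forall>t. x t = (\<Sum>s\<in>S. c s * s t)"
    and d: "\<forall>s\<in>S. d s \<ge> 0" "\<forall>t. y t = (\<Sum>s\<in>S. d s * s t)"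
    unfolding fcone_def by blast
  show ?thesis unfolding fcone_def
    by (rule CollectI, rule exI[of _ "\<lambda>s. c s + d s"])
       (simp add: c d distrib_right sum.distrib)
qed

lemma fcone_scale: "a \<ge> 0 \<Longrightarrow> x \<in> fcone S \<Longrightarrow> (\<lambda>t. a * x t) \<in> fcone S"
proof -
  assume a: "a \<ge> 0" "x \<in> fcone S"
  then obtain c where c: "\<forall>s\<in>S. c s \<ge> 0" "\<forall>t. x t = (\<Sum>s\<in>S. c s * s t)"
    unfolding fcone_def by blast
  show ?thesis unfolding fcone_def
    by (rule CollectI, rule exI[of _ "\<lambda>s. a * c s"])
       (simp add: c a sum_distrib_left mult.assoc)
qed

lemma fcone_gen: "finite S \<Longrightarrow> s \<in> S \<Longrightarrow> s \<in> fcone S"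
proof -
  assume a: "finite S" "s \<in> S"
  have "\<forall>t. s t = (\<Sum>u\<in>S. (if u = s then 1 else 0) * u t)"
  proof
    fix t
    have "(\<Sum>u\<in>S. (if u = s then 1 else 0) * u t) = (\<Sum>u\<in>S. if u = s then s t else 0)"
      by (rule sum.cong) auto
    also have "\<dots> = s t" using a by simp
    finally show "s t = (\<Sum>u\<in>S. (if u = s then 1 else 0) * u t)" by simp
  qed
  then show ?thesis unfolding fcone_def
    by (intro CollectI exI[of _ "\<lambda>u. if u = s then 1 else 0"]) simp
qed

lemma fcone_subset:
  assumes "finite T" "T \<subseteq> fcone S" shows "fcone T \<subseteq> fcone S"
proof
  fix x assume "x \<in> fcone T"
  then obtain c where c: "\<forall>s\<in>T. c s \<ge> 0" "\<forall>t. x t = (\<Sum>s\<in>T. c s * s t)"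
    unfolding fcone_def by blast
  have "\<And>F. F \<subseteq> T \<Longrightarrow> (\<lambda>t. \<Sum>s\<in>F. c s * s t) \<in> fcone S"
  proof -
    fix F assume "F \<subseteq> T"
    then have "finite F" using assms(1) finite_subset by blast
    then show "F \<subseteq> T \<Longrightarrow> (\<lambda>t. \<Sum>s\<in>F. c s * s t) \<in> fcone S"
    proof (induction F rule: finite_induct)
      case empty then show ?case using fcone_zero by simp
    next
      case (insert s F)
      have "(\<lambda>t. c s * s t) \<in> fcone S"
        using insert assms(2) c(1) by (intro fcone_scale) auto
      then have "(\<lambda>t. c s * s t + (\<Sum>s\<in>F. c s * s t)) \<in> fcone S"
        using insert by (intro fcone_add) auto
      then show ?case using insert by simp
    qed
  qed
  moreover have "x = (\<lambda>t. \<Sum>s\<in>T. c s * s t)" using c(2) by (simp add: fun_eq_iff)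
  ultimately show "x \<in> fcone S" by simp
qed

lemma fcone_mono: "finite T \<Longrightarrow> S \<subseteq> T \<Longrightarrow> fcone S \<subseteq> fcone T"
  by (meson fcone_gen fcone_subset finite_subset subset_iff)

lemma fin_Qgen: "finite {(\<lambda>t. sgn (P j / Ps j - P i / Ps i) * gamma j i t) | j i.
                           1 \<le> j \<and> j < i \<and> i \<le> (n::nat)}"
proof (rule finite_subset)
  show "{(\<lambda>t. sgn (P j / Ps j - P i / Ps i) * gamma j i t) | j i.
                           1 \<le> j \<and> j < i \<and> i \<le> (n::nat)} \<subseteq>
    (\<lambda>(j,i). (\<lambda>t. sgn (P j / Ps j - P i / Ps i) * gamma j i t)) ` ({1..n} \<times> {1..n})"
  proof
    fix x assume "x \<in> {(\<lambda>t. sgn (P j / Ps j - P i / Ps i) * gamma j i t) | j i.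
                           1 \<le> j \<and> j < i \<and> i \<le> (n::nat)}"
    then obtain j i where "x = (\<lambda>t. sgn (P j / Ps j - P i / Ps i) * gamma j i t)"
      "1 \<le> j" "j < i" "i \<le> n" by blast
    then show "x \<in> (\<lambda>(j,i). (\<lambda>t. sgn (P j / Ps j - P i / Ps i) * gamma j i t)) ` ({1..n} \<times> {1..n})"
      by (intro image_eqI[of _ _ "(j,i)"]) auto
  qed
qed simp

lemma fin_Sgen: "finite {gamma i j | i j. i \<in> {1..n} \<and> j \<in> {1..n} \<and> \<sigma> j = \<sigma> i + (1::nat)}"
proof (rule finite_subset)
  show "{gamma i j | i j. i \<in> {1..n} \<and> j \<in> {1..n} \<and> \<sigma> j = \<sigma> i + (1::nat)} \<subseteq>
    (\<lambda>(i,j). gamma i j) ` ({1..n} \<times> {1..n})"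
  proof
    fix x assume "x \<in> {gamma i j | i j. i \<in> {1..n} \<and> j \<in> {1..n} \<and> \<sigma> j = \<sigma> i + (1::nat)}"
    then obtain i j where "x = gamma i j" "i \<in> {1..n}" "j \<in> {1..n}" by blast
    then show "x \<in> (\<lambda>(i,j). gamma i j) ` ({1..n} \<times> {1..n})"
      by (intro image_eqI[of _ _ "(i,j)"]) auto
  qed
qed simp



lemma gamma_add: "i \<noteq> h \<Longrightarrow> h \<noteq> j \<Longrightarrow> i \<noteq> j \<Longrightarrow> gamma i j = (\<lambda>t. gamma i h t + gamma h j t)"
  unfolding gamma_def by (auto simp: fun_eq_iff)

lemma fcone_subset': "finite T \<Longrightarrow> T \<subseteq> A \<Longrightarrow> A = fcone S \<Longrightarrow> fcone T \<subseteq> A"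
  using fcone_subset by blast

lemma Q_eq:
  assumes surj: "\<sigma> ` {1..n} = {1..K}" and P: "P \<in> Cset n Ps \<sigma>"
  shows "Qcone n P Ps = Qsigma n \<sigma>"
proof -
  define r where "r i = P i / Ps i" for i
  have eq: "\<And>i j. i \<in> {1..n} \<Longrightarrow> j \<in> {1..n} \<Longrightarrow> \<sigma> i = \<sigma> j \<Longrightarrow> r i = r j"
    using P unfolding Cset_def r_def by blast
  have adj: "\<And>i j. i \<in> {1..n} \<Longrightarrow> j \<in> {1..n} \<Longrightarrow> \<sigma> j = \<sigma> i + 1 \<Longrightarrow> r i > r j"
    using P unfolding Cset_def r_def by blast
  have gen: "\<And>i j. i \<in> {1..n} \<Longrightarrow> j \<in> {1..n} \<Longrightarrow> \<sigma> j = \<sigma> i + 1 \<Longrightarrow> gamma i j \<in> Qsigma n \<sigma>"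
    unfolding Qsigma_def by (rule fcone_gen[OF fin_Sgen]) blast
  have chain: "\<And>i j. i \<in> {1..n} \<Longrightarrow> j \<in> {1..n} \<Longrightarrow> \<sigma> j = \<sigma> i + Suc d \<Longrightarrow>
      r i > r j \<and> gamma i j \<in> Qsigma n \<sigma>" for d
  proof (induction d)
    case 0 then show ?case using adj gen by simp
  next
    case (Suc d)
    have "\<sigma> j \<in> \<sigma> ` {1..n}" "\<sigma> i \<in> \<sigma> ` {1..n}" using Suc.prems(1,2) by (auto intro: imageI)
    then have "\<sigma> j \<in> {1..K}" "\<sigma> i \<in> {1..K}" unfolding surj by auto
    then have "\<sigma> i + Suc d \<in> {1..K}" using Suc.prems by auto
    then obtain h where h: "h \<in> {1..n}" "\<sigma> h = \<sigma> i + Suc d" using surj by (metis imageE)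
    have 1: "r i > r h \<and> gamma i h \<in> Qsigma n \<sigma>" using Suc.IH[OF Suc.prems(1) h(1) h(2)] .
    have "\<sigma> j = \<sigma> h + 1" using h Suc.prems by simp
    then have 2: "r h > r j" "gamma h j \<in> Qsigma n \<sigma>" using adj gen h Suc.prems by auto
    have "i \<noteq> h" "h \<noteq> j" "i \<noteq> j" using h Suc.prems by auto
    then have "gamma i j = (\<lambda>t. gamma i h t + gamma h j t)" by (rule gamma_add)
    then have "gamma i j \<in> Qsigma n \<sigma>" using 1 2 unfolding Qsigma_def by (simp add: fcone_add)
    then show ?case using 1 2 by simp
  qed
  have lt: "\<And>i j. i \<in> {1..n} \<Longrightarrow> j \<in> {1..n} \<Longrightarrow> \<sigma> i < \<sigma> j \<Longrightarrow>
      r i > r j \<and> gamma i j \<in> Qsigma n \<sigma>"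
  proof -
    fix i j assume a: "i \<in> {1..n}" "j \<in> {1..n}" "\<sigma> i < \<sigma> j"
    then have "\<sigma> j = \<sigma> i + Suc (\<sigma> j - \<sigma> i - 1)" by simp
    then show "r i > r j \<and> gamma i j \<in> Qsigma n \<sigma>" using chain a by blast
  qed
  have neg: "i \<noteq> j \<Longrightarrow> (\<lambda>t. - 1 * gamma j i t) = gamma i j" for i j
    unfolding gamma_def by (auto simp: fun_eq_iff)
  show ?thesis
  proof
    show "Qcone n P Ps \<subseteq> Qsigma n \<sigma>"
      unfolding Qcone_def
    proof (rule fcone_subset'[OF fin_Qgen _ Qsigma_def], rule subsetI)
      fix x assume "x \<in> {(\<lambda>t. sgn (P j / Ps j - P i / Ps i) * gamma j i t) | j i.
                           1 \<le> j \<and> j < i \<and> i \<le> n}"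
      then obtain j i where x: "x = (\<lambda>t. sgn (r j - r i) * gamma j i t)"
        and ji: "j \<in> {1..n}" "i \<in> {1..n}" "j < i" unfolding r_def by auto
      consider "\<sigma> j = \<sigma> i" | "\<sigma> j < \<sigma> i" | "\<sigma> i < \<sigma> j" by linarith
      then show "x \<in> Qsigma n \<sigma>"
      proof cases
        case 1
        then have "r j = r i" using eq[OF ji(1) ji(2)] by blast
        then have "x = (\<lambda>_. 0)" using x by simp
        then show ?thesis unfolding Qsigma_def using fcone_zero by simp
      next
        case 2
        then have "r j > r i" "gamma j i \<in> Qsigma n \<sigma>" using lt ji by auto
        then show ?thesis using x by simp
      next
        case 3
        then have "r i > r j" "gamma i j \<in> Qsigma n \<sigma>" using lt ji by auto
        then show ?thesis using x neg[of i j] ji by simp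
      qed
    qed
  next
    show "Qsigma n \<sigma> \<subseteq> Qcone n P Ps"
      unfolding Qsigma_def Qcone_def
    proof (rule fcone_mono[OF fin_Qgen], rule subsetI)
      fix x assume "x \<in> {gamma i j | i j. i \<in> {1..n} \<and> j \<in> {1..n} \<and> \<sigma> j = \<sigma> i + 1}"
      then obtain i j where x: "x = gamma i j" and ij: "i \<in> {1..n}" "j \<in> {1..n}" "\<sigma> j = \<sigma> i + 1"
        by blast
      have rr: "r i > r j" using adj ij by blast
      then have "i \<noteq> j" by auto
      then consider "i < j" | "j < i" by linarith
      then show "x \<in> {(\<lambda>t. sgn (P j / Ps j - P i / Ps i) * gamma j i t) | j i.
                           1 \<le> j \<and> j < i \<and> i \<le> n}"
      proof cases
        case 1
        have "x = (\<lambda>t. sgn (P i / Ps i - P j / Ps j) * gamma i j t)"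
          using rr x unfolding r_def by simp
        then show ?thesis using 1 ij by (intro CollectI exI[of _ i] exI[of _ j]) auto
      next
        case 2
        have "x = (\<lambda>t. sgn (P j / Ps j - P i / Ps i) * gamma j i t)"
          using rr x neg[of i j] 2 unfolding r_def by simp
        then show ?thesis using 2 ij by (intro CollectI exI[of _ j] exI[of _ i]) auto
      qed
    qed
  qed
qed



lemma exists_sigma:
  assumes P: "P \<in> simplex n" and n: "n \<ge> 1"
  shows "\<exists>\<sigma> k'. k' \<le> n - 1 \<and> \<sigma> ` {1..n} = {1..k'+1} \<and> P \<in> Cset n Ps \<sigma>"
proof -
  define r where "r i = P i / Ps i" for i
  define V where "V = r ` {1..n}"
  define f where "f v = card {w\<in>V. w > v}" for v
  define \<sigma> where "\<sigma> i = f (r i) + 1" for i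
  have finV: "finite V" unfolding V_def by simp
  have neV: "V \<noteq> {}" unfolding V_def using n by auto
  have cardV: "card V \<le> n" unfolding V_def using card_image_le[of "{1..n}" r] by simp
  have cV: "card V \<ge> 1" using finV neV by (simp add: Suc_le_eq card_gt_0_iff)
  have mono: "v \<le> v' \<Longrightarrow> f v' \<le> f v" for v v'
    unfolding f_def using finV by (intro card_mono) auto
  have smono: "v \<in> V \<Longrightarrow> v' \<in> V \<Longrightarrow> v < v' \<Longrightarrow> f v' < f v" for v v'
    unfolding f_def using finV by (intro psubset_card_mono) auto
  have inj: "inj_on f V"
  proof (rule inj_onI)
    fix v v' assume a: "v \<in> V" "v' \<in> V" "f v = f v'"
    show "v = v'"
    proof (rule linorder_cases[of v v'])
      assume "v < v'" then show ?thesis using smono[of v v'] a by simp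
    next
      assume "v' < v" then show ?thesis using smono[of v' v] a by simp
    qed
  qed
  have sub: "f ` V \<subseteq> {0..<card V}"
  proof
    fix x assume "x \<in> f ` V"
    then obtain v where v: "v \<in> V" "x = f v" by blast
    have "{w\<in>V. w > v} \<subset> V" using v by auto
    then have "f v < card V" unfolding f_def using finV by (meson psubset_card_mono)
    then show "x \<in> {0..<card V}" using v by simp
  qed
  have img: "f ` V = {0..<card V}"
    by (rule card_subset_eq) (use sub inj card_image in auto)
  have "\<sigma> ` {1..n} = Suc ` f ` V" unfolding \<sigma>_def V_def by (auto simp: image_image)
  also have "\<dots> = {1..card V}" unfolding img image_Suc_atLeastLessThan by auto
  finally have s: "\<sigma> ` {1..n} = {1..(card V - 1) + 1}" using cV by simp
  have "P \<in> Cset n Ps \<sigma>"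
    unfolding Cset_def
  proof (intro CollectI conjI ballI impI)
    show "P \<in> simplex n" by (rule P)
  next
    fix i j assume ij: "i \<in> {1..n}" "j \<in> {1..n}" "\<sigma> i = \<sigma> j"
    then have "f (r i) = f (r j)" unfolding \<sigma>_def by simp
    moreover have "r i \<in> V" "r j \<in> V" using ij unfolding V_def by auto
    ultimately have "r i = r j" using inj by (meson inj_on_def)
    then show "P i / Ps i = P j / Ps j" unfolding r_def .
  next
    fix i j assume ij: "i \<in> {1..n}" "j \<in> {1..n}" "\<sigma> j = \<sigma> i + 1"
    then have "f (r j) > f (r i)" unfolding \<sigma>_def by simp
    then have "r i > r j" using mono[of "r i" "r j"] by (cases "r i \<le> r j") auto
    then show "P i / Ps i > P j / Ps j" unfolding r_def .
  qed
  moreover have "card V - 1 \<le> n - 1" using cardV by simp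
  ultimately show ?thesis using s by blast
qed



lemma sum_add_split: "(\<Sum>j\<in>A. m r j * (P j + q j)) = (\<Sum>j\<in>A. m r j * P j) + (\<Sum>j\<in>A. (m::nat\<Rightarrow>nat\<Rightarrow>real) r j * q j)"
  by (simp add: distrib_left sum.distrib)

theorem mainTheorem10:
  fixes n k :: nat and Ps M :: "nat \<Rightarrow> real" and m :: "nat \<Rightarrow> nat \<Rightarrow> real"
  assumes "n \<ge> 2"
    and "Ps \<in> vecn n" and "\<forall>i\<in>{1..n}. Ps i > 0" and "(\<Sum>i=1..n. Ps i) = 1"
    and "\<forall>j\<in>{1..n}. m 0 j = 1" and "M 0 = 1"
    and "Lman n k m M \<inter> simplex_pos n \<noteq> {}"
  shows "{P0 \<in> Lman n k m M \<inter> simplex_pos n.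
            translate P0 (Qcone n P0 Ps) \<inter> Lman n k m M = {P0}}
         = \<Union>{Lman n k m M \<inter> Cset n Ps \<sigma> \<inter> simplex_pos n | \<sigma> k'.
               k' \<le> n - 1 \<and> \<sigma> ` {1..n} = {1..k'+1} \<and>
               Lman n k m M \<inter> Cset n Ps \<sigma> \<noteq> {} \<and>
               L0 n k m \<inter> Qsigma n \<sigma> = {(\<lambda>_. 0)}}
       \<and> (\<forall>\<sigma> k'. k' \<le> n - 1 \<and> \<sigma> ` {1..n} = {1..k'+1} \<longrightarrow>
              (\<forall>P\<in>Cset n Ps \<sigma>. Qcone n P Ps = Qsigma n \<sigma>))"
proof -
  have c2: "\<forall>\<sigma> k'. k' \<le> n - 1 \<and> \<sigma> ` {1..n} = {1..k'+1} \<longrightarrow>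
              (\<forall>P\<in>Cset n Ps \<sigma>. Qcone n P Ps = Qsigma n \<sigma>)"
  proof (intro allI impI ballI)
    fix \<sigma> :: "nat \<Rightarrow> nat" and k' :: nat and P
    assume a: "k' \<le> n - 1 \<and> \<sigma> ` {1..n} = {1..k'+1}" "P \<in> Cset n Ps \<sigma>"
    show "Qcone n P Ps = Qsigma n \<sigma>" using Q_eq[of \<sigma> n "k'+1" P Ps] a by simp
  qed
  have pos_sub: "simplex_pos n \<subseteq> simplex n"
    unfolding simplex_pos_def simplex_def by (auto simp: less_imp_le)
  have zL0: "(\<lambda>_. 0) \<in> L0 n k m" unfolding L0_def vecn_def by simp
  have addL: "(\<lambda>t. P t + q t) \<in> Lman n k m M" if "P \<in> Lman n k m M" "q \<in> L0 n k m" for P q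
  proof -
    have "(\<lambda>t. P t + q t) \<in> vecn n" using that unfolding Lman_def L0_def vecn_def by auto
    moreover have "\<forall>r\<le>k. (\<Sum>j=1..n. m r j * (P j + q j)) = M r"
      using that unfolding Lman_def L0_def by (simp add: sum_add_split)
    ultimately show ?thesis unfolding Lman_def by simp
  qed
  have diffL: "q \<in> L0 n k m" if "P \<in> Lman n k m M" "(\<lambda>t. P t + q t) \<in> Lman n k m M" for P q
  proof -
    have "q \<in> vecn n"
    proof -
      have "\<forall>t. t \<notin> {1..n} \<longrightarrow> P t = 0" "\<forall>t. t \<notin> {1..n} \<longrightarrow> P t + q t = 0"
        using that unfolding Lman_def vecn_def by auto
      then show ?thesis unfolding vecn_def by auto
    qed
    moreover have "\<forall>r\<le>k. (\<Sum>j=1..n. m r j * q j) = 0"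
    proof (intro allI impI)
      fix r assume "r \<le> k"
      then have "(\<Sum>j=1..n. m r j * (P j + q j)) = M r" "(\<Sum>j=1..n. m r j * P j) = M r"
        using that unfolding Lman_def by auto
      then show "(\<Sum>j=1..n. m r j * q j) = 0" by (simp add: sum_add_split)
    qed
    ultimately show ?thesis unfolding L0_def by simp
  qed
  have c1: "{P0 \<in> Lman n k m M \<inter> simplex_pos n.
            translate P0 (Qcone n P0 Ps) \<inter> Lman n k m M = {P0}}
         = \<Union>{Lman n k m M \<inter> Cset n Ps \<sigma> \<inter> simplex_pos n | \<sigma> k'.
               k' \<le> n - 1 \<and> \<sigma> ` {1..n} = {1..k'+1} \<and>
               Lman n k m M \<inter> Cset n Ps \<sigma> \<noteq> {} \<and>
               L0 n k m \<inter> Qsigma n \<sigma> = {(\<lambda>_. 0)}}" (is "?A = ?B")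
  proof
    show "?A \<subseteq> ?B"
    proof
      fix P0 assume "P0 \<in> ?A"
      then have P0: "P0 \<in> Lman n k m M" "P0 \<in> simplex_pos n"
        and T: "translate P0 (Qcone n P0 Ps) \<inter> Lman n k m M = {P0}" by auto
      obtain \<sigma> k' where s: "k' \<le> n - 1" "\<sigma> ` {1..n} = {1..k'+1}" "P0 \<in> Cset n Ps \<sigma>"
        using exists_sigma[of P0 n Ps] P0(2) pos_sub assms(1) by auto
      have QQ: "Qcone n P0 Ps = Qsigma n \<sigma>" using Q_eq[OF s(2) s(3)] .
      have "L0 n k m \<inter> Qsigma n \<sigma> = {(\<lambda>_. 0)}"
      proof
        show "{(\<lambda>_. 0)} \<subseteq> L0 n k m \<inter> Qsigma n \<sigma>"
          using zL0 fcone_zero unfolding Qsigma_def by auto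
      next
        show "L0 n k m \<inter> Qsigma n \<sigma> \<subseteq> {(\<lambda>_. 0)}"
        proof
          fix q assume q: "q \<in> L0 n k m \<inter> Qsigma n \<sigma>"
          have "(\<lambda>t. P0 t + q t) \<in> translate P0 (Qcone n P0 Ps)"
            unfolding translate_def QQ using q by blast
          moreover have "(\<lambda>t. P0 t + q t) \<in> Lman n k m M" using addL P0(1) q by blast
          ultimately have "(\<lambda>t. P0 t + q t) = P0" using T by blast
          then have "q = (\<lambda>_. 0)" by (simp add: fun_eq_iff)
          then show "q \<in> {(\<lambda>_. 0)}" by simp
        qed
      qed
      moreover have "Lman n k m M \<inter> Cset n Ps \<sigma> \<noteq> {}" using s P0 by blast
      ultimately have "Lman n k m M \<inter> Cset n Ps \<sigma> \<inter> simplex_pos n \<in> {Lman n k m M \<inter> Cset n Ps \<sigma> \<inter> simplex_pos n | \<sigma> k'.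
               k' \<le> n - 1 \<and> \<sigma> ` {1..n} = {1..k'+1} \<and>
               Lman n k m M \<inter> Cset n Ps \<sigma> \<noteq> {} \<and>
               L0 n k m \<inter> Qsigma n \<sigma> = {(\<lambda>_. 0)}}"
        using s by (intro CollectI exI[of _ \<sigma>] exI[of _ k']) simp
      moreover have "P0 \<in> Lman n k m M \<inter> Cset n Ps \<sigma> \<inter> simplex_pos n" using s P0 by simp
      ultimately show "P0 \<in> ?B" by (rule UnionI)
    qed
  next
    show "?B \<subseteq> ?A"
    proof
      fix P assume "P \<in> ?B"
      then obtain X where X: "P \<in> X" "X \<in> {Lman n k m M \<inter> Cset n Ps \<sigma> \<inter> simplex_pos n | \<sigma> k'.
               k' \<le> n - 1 \<and> \<sigma> ` {1..n} = {1..k'+1} \<and>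
               Lman n k m M \<inter> Cset n Ps \<sigma> \<noteq> {} \<and>
               L0 n k m \<inter> Qsigma n \<sigma> = {(\<lambda>_. 0)}}" by (rule UnionE)
      from X(2) obtain \<sigma> k' where s: "k' \<le> n - 1" "\<sigma> ` {1..n} = {1..k'+1}"
        and z: "L0 n k m \<inter> Qsigma n \<sigma> = {(\<lambda>_. 0)}"
        and XX: "X = Lman n k m M \<inter> Cset n Ps \<sigma> \<inter> simplex_pos n"
        by blast
      have P: "P \<in> Lman n k m M" "P \<in> Cset n Ps \<sigma>" "P \<in> simplex_pos n" using X(1) XX by auto
      have QQ: "Qcone n P Ps = Qsigma n \<sigma>" using Q_eq[OF s(2) P(2)] .
      have "translate P (Qcone n P Ps) \<inter> Lman n k m M = {P}"
      proof
        show "{P} \<subseteq> translate P (Qcone n P Ps) \<inter> Lman n k m M"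
        proof -
          have "P = (\<lambda>t. P t + 0)" by simp
          then have "P \<in> translate P (Qcone n P Ps)"
            unfolding translate_def QQ Qsigma_def
            by (intro CollectI exI[of _ "\<lambda>_. 0"] conjI fcone_zero) simp
          then show ?thesis using P(1) by blast
        qed
      next
        show "translate P (Qcone n P Ps) \<inter> Lman n k m M \<subseteq> {P}"
        proof
          fix x assume x: "x \<in> translate P (Qcone n P Ps) \<inter> Lman n k m M"
          then obtain q where q: "x = (\<lambda>t. P t + q t)" "q \<in> Qsigma n \<sigma>"
            unfolding translate_def QQ by blast
          have "q \<in> L0 n k m" using diffL[of P q] P(1) x q(1) by blast
          then have "q = (\<lambda>_. 0)" using z q(2) by blast
          then show "x \<in> {P}" using q(1) by simp
        qed
      qed
      then show "P \<in> ?A" using P by (intro CollectI conjI IntI)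
    qed
  qed
  show ?thesis by (rule conjI[OF c1 c2])
qed


end
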